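(* Let $S = Z(w^2 - F_{10}(x,y,z)) \subset \mathbb{P}(1,1,2,5)$ (weights $1,1,2,5$ for $x,y,z,w$, $F_{10}$ weighted homogeneous of degree $10$) be a surface with at worst canonical singularities. Let $G \leq \mathrm{Aut}(S)$ be the subgroup generated by those automorphisms whose associated matrix in $GL(2,\mathbb{C})$ is a scalar matrix. Then $|G| \leq 10$.
   Context: Every automorphism of $S$ extends to $\mathbb{P}(1,1,2,5)$ and has a unique lift to a graded automorphism of $\mathbb{C}[x,y,z,w]$ of the form $w\mapsto w$, $z\mapsto z$, $x\mapsto ax+cy$, $y \mapsto bx+dy$; the associated matrix is $A=\begin{pmatrix} a&b\\ c&d\end{pmatrix}$. *)

theory Defs
  imports Complex_Main
begin

text \<open>A weighted homogeneous polynomial F10(x,y,z) of degree 10 (weights 1,1,2) is given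
  by its coefficient function: c i j k is the coefficient of x^i y^j z^k.\<close>

definition wdeg10 :: "(nat \<Rightarrow> nat \<Rightarrow> nat \<Rightarrow> complex) \<Rightarrow> bool" where
  "wdeg10 c \<longleftrightarrow> (\<forall>i j k. c i j k \<noteq> 0 \<longrightarrow> i + j + 2 * k = 10)"

definition evF :: "(nat \<Rightarrow> nat \<Rightarrow> nat \<Rightarrow> complex) \<Rightarrow> complex \<Rightarrow> complex \<Rightarrow> complex \<Rightarrow> complex" where
  "evF c x y z = (\<Sum>i\<le>10. \<Sum>j\<le>10. \<Sum>k\<le>10. c i j k * x ^ i * y ^ j * z ^ k)"

definition dxF :: "(nat \<Rightarrow> nat \<Rightarrow> nat \<Rightarrow> complex) \<Rightarrow> complex \<Rightarrow> complex \<Rightarrow> complex \<Rightarrow> complex" where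
  "dxF c x y z = (\<Sum>i\<le>10. \<Sum>j\<le>10. \<Sum>k\<le>10. of_nat i * c i j k * x ^ (i - 1) * y ^ j * z ^ k)"

definition dyF :: "(nat \<Rightarrow> nat \<Rightarrow> nat \<Rightarrow> complex) \<Rightarrow> complex \<Rightarrow> complex \<Rightarrow> complex \<Rightarrow> complex" where
  "dyF c x y z = (\<Sum>i\<le>10. \<Sum>j\<le>10. \<Sum>k\<le>10. of_nat j * c i j k * x ^ i * y ^ (j - 1) * z ^ k)"

definition dzF :: "(nat \<Rightarrow> nat \<Rightarrow> nat \<Rightarrow> complex) \<Rightarrow> complex \<Rightarrow> complex \<Rightarrow> complex \<Rightarrow> complex" where
  "dzF c x y z = (\<Sum>i\<le>10. \<Sum>j\<le>10. \<Sum>k\<le>10. of_nat k * c i j k * x ^ i * y ^ j * z ^ (k - 1))"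

definition cone_pt :: "(nat \<Rightarrow> nat \<Rightarrow> nat \<Rightarrow> complex) \<Rightarrow> complex \<times> complex \<times> complex \<times> complex \<Rightarrow> bool" where
  "cone_pt c p = (case p of (x, y, z, w) \<Rightarrow> p \<noteq> (0, 0, 0, 0) \<and> w ^ 2 = evF c x y z)"

definition cone_sing :: "(nat \<Rightarrow> nat \<Rightarrow> nat \<Rightarrow> complex) \<Rightarrow> complex \<times> complex \<times> complex \<times> complex \<Rightarrow> bool" where
  "cone_sing c p = (case p of (x, y, z, w) \<Rightarrow> cone_pt c p \<and>
      dxF c x y z = 0 \<and> dyF c x y z = 0 \<and> dzF c x y z = 0 \<and> 2 * w = 0)"

definition wact :: "complex \<Rightarrow> complex \<times> complex \<times> complex \<times> complex \<Rightarrow> complex \<times> complex \<times> complex \<times> complex" where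
  "wact t p = (case p of (x, y, z, w) \<Rightarrow> (t * x, t * y, t ^ 2 * z, t ^ 5 * w))"

text \<open>Surrogate for "at worst canonical singularities":
  only finitely many points of S in P(1,1,2,5) at which the affine cone is singular.\<close>
definition finitely_many_cone_sing :: "(nat \<Rightarrow> nat \<Rightarrow> nat \<Rightarrow> complex) \<Rightarrow> bool" where
  "finitely_many_cone_sing c \<longleftrightarrow>
     (\<exists>P. finite P \<and> (\<forall>p. cone_sing c p \<longrightarrow> (\<exists>t q. t \<noteq> 0 \<and> q \<in> P \<and> p = wact t q)))"

text \<open>Scalars a such that the graded automorphism x\<mapsto>ax, y\<mapsto>ay, z\<mapsto>z, w\<mapsto>w of C[x,y,z,w]
  preserves S (i.e. its affine cone); these are exactly the unique lifts of the
  automorphisms of S with scalar associated matrix a*I.\<close>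
definition scalar_lifts :: "(nat \<Rightarrow> nat \<Rightarrow> nat \<Rightarrow> complex) \<Rightarrow> complex set" where
  "scalar_lifts c = {a. a \<noteq> 0 \<and> (\<forall>x y z w.
      cone_pt c (x, y, z, w) \<longleftrightarrow> cone_pt c (a * x, a * y, z, w))}"

inductive_set gen_group :: "complex set \<Rightarrow> complex set" for A where
  one: "1 \<in> gen_group A"
| gen: "a \<in> A \<Longrightarrow> a \<in> gen_group A"
| mult: "a \<in> gen_group A \<Longrightarrow> b \<in> gen_group A \<Longrightarrow> a * b \<in> gen_group A"
| inv: "a \<in> gen_group A \<Longrightarrow> inverse a \<in> gen_group A"

end

theory Submission
  imports Defs "HOL-Analysis.Poly_Roots"
begin

lemma lift_eq:
  assumes "a \<in> scalar_lifts c"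
  shows "evF c (a*x) (a*y) z = evF c x y z"
proof (cases "x = 0 \<and> y = 0 \<and> z = 0")
  case True then show ?thesis by simp
next
  case False
  define w where "w = csqrt (evF c x y z)"
  have w2: "w^2 = evF c x y z" unfolding w_def by simp
  have "cone_pt c (x,y,z,w)" using False w2 by (auto simp: cone_pt_def)
  hence "cone_pt c (a*x,a*y,z,w)" using assms by (auto simp: scalar_lifts_def)
  hence "w^2 = evF c (a*x) (a*y) z" by (simp add: cone_pt_def)
  with w2 show ?thesis by simp
qed

lemma diff_expand:
  "evF c (a*x) (a*y) z - evF c x y z =
   (\<Sum>i\<le>10. (\<Sum>j\<le>10. (\<Sum>k\<le>10. (c i j k * (a^(i+j) - 1)) * z^k) * y^j) * x^i)"
  unfolding evF_def sum_subtractf[symmetric] sum_distrib_right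
  by (intro sum.cong refl) (simp add: power_mult_distrib power_add algebra_simps)

lemma poly_coeff0:
  fixes f :: "nat \<Rightarrow> complex"
  assumes "\<And>x. (\<Sum>i\<le>10. f i * x^i) = 0" "i \<le> 10"
  shows "f i = 0"
proof -
  have "\<forall>x. (\<Sum>i\<le>10. f i * x^i) = 0" using assms(1) by blast
  hence "\<forall>k. k \<le> 10 \<longrightarrow> f k = 0" by (subst (asm) polyfun_eq_0)
  thus ?thesis using assms(2) by blast
qed

lemma coeffs_zero:
  assumes "a \<in> scalar_lifts c" "i \<le> 10" "j \<le> 10" "k \<le> 10"
  shows "c i j k * (a^(i+j) - 1) = 0"
proof -
  have h: "(\<Sum>i\<le>10. (\<Sum>j\<le>10. (\<Sum>k\<le>10. (c i j k * (a^(i+j) - 1)) * z^k) * y^j) * x^i) = 0" for x y z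
    using lift_eq[OF assms(1), of x y z] diff_expand[of c a x y z] by simp
  have h2: "(\<Sum>j\<le>10. (\<Sum>k\<le>10. (c i j k * (a^(i+j) - 1)) * z^k) * y^j) = 0" for y z
    by (rule poly_coeff0[where f="\<lambda>i. (\<Sum>j\<le>10. (\<Sum>k\<le>10. (c i j k * (a^(i+j) - 1)) * z^k) * y^j)", OF h assms(2)])
  have h3: "(\<Sum>k\<le>10. (c i j k * (a^(i+j) - 1)) * z^k) = 0" for z
    by (rule poly_coeff0[where f="\<lambda>j. (\<Sum>k\<le>10. (c i j k * (a^(i+j) - 1)) * z^k)", OF h2 assms(3)])
  show ?thesis
    by (rule poly_coeff0[where f="\<lambda>k. c i j k * (a^(i+j) - 1)", OF h3 assms(4)])
qed

lemma exists_coeff: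
  assumes "wdeg10 c" "finitely_many_cone_sing c"
  shows "\<exists>i j k. c i j k \<noteq> 0 \<and> 0 < i + j"
proof (rule ccontr)
  assume "\<not> ?thesis"
  hence nz: "c i j k \<noteq> 0 \<Longrightarrow> i = 0 \<and> j = 0 \<and> k = 5" for i j k
    using assms(1) unfolding wdeg10_def by fastforce
  have sing: "cone_sing c (x,1,0,0)" for x
  proof -
    have t1: "c i j k * x ^ i * 1 ^ j * 0 ^ k = 0" for i j k
      by (cases "c i j k = 0") (auto dest: nz)
    have t2: "of_nat i * c i j k * x ^ (i-1) * 1 ^ j * 0 ^ k = 0" for i j k
      by (cases "c i j k = 0") (auto dest: nz)
    have t3: "of_nat j * c i j k * x ^ i * 1 ^ (j-1) * 0 ^ k = 0" for i j k
      by (cases "c i j k = 0") (auto dest: nz)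
    have t4: "of_nat k * c i j k * x ^ i * 1 ^ j * 0 ^ (k-1) = 0" for i j k
      by (cases "c i j k = 0") (auto dest: nz)
    have "evF c x 1 0 = 0" unfolding evF_def by (intro sum.neutral ballI) (rule t1)
    moreover have "dxF c x 1 0 = 0" unfolding dxF_def by (intro sum.neutral ballI) (rule t2)
    moreover have "dyF c x 1 0 = 0" unfolding dyF_def by (intro sum.neutral ballI) (rule t3)
    moreover have "dzF c x 1 0 = 0" unfolding dzF_def by (intro sum.neutral ballI) (rule t4)
    ultimately show ?thesis by (simp add: cone_sing_def cone_pt_def)
  qed
  obtain P where P: "finite P" "\<And>p. cone_sing c p \<Longrightarrow> \<exists>t q. t \<noteq> 0 \<and> q \<in> P \<and> p = wact t q"
    using assms(2) unfolding finitely_many_cone_sing_def by blast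
  have "x \<in> (\<lambda>q. fst q / fst (snd q)) ` P" for x
  proof -
    obtain t q where tq: "t \<noteq> 0" "q \<in> P" "(x,1,0,0) = wact t q" using P(2)[OF sing] by blast
    obtain q1 q2 q3 q4 where q: "q = (q1,q2,q3,q4)" by (cases q) auto
    have "x = t*q1" "1 = t*q2" using tq(3) by (auto simp: wact_def q)
    hence q2: "q2 \<noteq> 0" by auto
    have "x * q2 = q1 * (t * q2)" using \<open>x = t*q1\<close> by simp
    also have "\<dots> = q1" using \<open>1 = t*q2\<close> by simp
    finally have "x = q1/q2" using q2 by (simp add: eq_divide_eq)
    thus ?thesis using tq(2) q by force
  qed
  hence "UNIV \<subseteq> (\<lambda>q. fst q / fst (snd q)) ` P" by blast
  hence "finite (UNIV :: complex set)" using P(1) finite_subset by blast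
  thus False using infinite_UNIV_char_0 by blast
qed

theorem corollary2p9:
  fixes c :: "nat \<Rightarrow> nat \<Rightarrow> nat \<Rightarrow> complex"
  assumes "wdeg10 c"
    and "finitely_many_cone_sing c"
  shows "finite (gen_group (scalar_lifts c)) \<and> card (gen_group (scalar_lifts c)) \<le> 10"
proof -
  obtain i j k where ijk: "c i j k \<noteq> 0" "0 < i + j" using exists_coeff[OF assms] by blast
  have deg: "i + j + 2*k = 10" using assms(1) ijk(1) unfolding wdeg10_def by blast
  define d where "d = i + j"
  have d: "0 < d" "d \<le> 10" using ijk deg d_def by auto
  have sl: "a \<in> scalar_lifts c \<Longrightarrow> a ^ d = 1" for a
    using coeffs_zero[of a c i j k] deg ijk(1) d_def by auto
  have sub: "gen_group (scalar_lifts c) \<subseteq> {z. z ^ d = 1}"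
  proof
    fix a assume "a \<in> gen_group (scalar_lifts c)"
    then show "a \<in> {z. z ^ d = 1}"
      by (induction rule: gen_group.induct) (auto simp: sl power_mult_distrib power_inverse)
  qed
  have cd: "card {z::complex. z ^ d = 1} = d" using card_roots_unity_eq d(1) by blast
  hence fin: "finite {z::complex. z ^ d = 1}" using d(1) card.infinite by fastforce
  show ?thesis using finite_subset[OF sub fin] card_mono[OF fin sub] cd d(2) by simp
qed

end
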